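(* Let $\eta_3=\int_1^\infty\frac{\mathrm{d}t}{\sqrt{t^6-1}}$ and let $\mathrm{cleafh}_3:(-\eta_3,\eta_3)\to\mathbb{R}$ be the hyperbolic leaf function of basis $3$. For every $l\in(-\eta_3,\eta_3)$, writing $C=\mathrm{cleafh}_3(l)$, $$\Bigl(\mathrm{cleafh}_3\Bigl(\frac l2\Bigr)\Bigr)^2=\frac{-1+C^2+\sqrt3\sqrt{1+C^2+C^4}}{4C^2+2}+\frac{\sqrt3\,C\sqrt{-3-6C^2+2\sqrt3\,(1+2C^2)\sqrt{1+C^2+C^4}}}{2(1+2C^2)^{3/2}}.$$
   Context: For a natural number $n$, let $\eta_n=\int_1^\infty\frac{\mathrm{d}t}{\sqrt{t^{2n}-1}}$. The hyperbolic leaf function $\mathrm{cleafh}_n$ is the solution $r(l)$ on $(-\eta_n,\eta_n)$ of $\frac{\mathrm{d}^2r}{\mathrm{d}l^2}=n\,r^{2n-1}$ with $r(0)=1$, $r'(0)=0$; it is even, and for $l\ge0$ it is the inverse of $r\mapsto\int_1^r\frac{\mathrm{d}t}{\sqrt{t^{2n}-1}}$, $r\ge1$. *)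

theory Defs
  imports "HOL-Analysis.Analysis"
begin

definition eta :: "nat \<Rightarrow> real" where
  "eta n = (LBINT t=ereal 1..\<infinity>. 1 / sqrt (t ^ (2*n) - 1))"

definition cleafh :: "nat \<Rightarrow> real \<Rightarrow> real" where
  "cleafh n l = (THE r. r \<ge> 1 \<and>
      (LBINT t=ereal 1..ereal r. 1 / sqrt (t ^ (2*n) - 1)) = \<bar>l\<bar>)"

end

theory Submission
  imports Defs
begin


definition qq :: "real \<Rightarrow> real" where
  "qq v = (1+v^2) * ((1+v^2)^2 + (1+v^2) + 1)"
definition hh :: "real \<Rightarrow> real" where
  "hh v = 1 / sqrt (qq v)"
definition II :: "real \<Rightarrow> real" where "II y = integral {-2..y} hh"
definition G2 :: "real \<Rightarrow> real" where "G2 u = II (sqrt (u-1)) - II 0"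

lemma qq_pos: "qq v > 0"
proof -
  have a: "1 + v^2 \<ge> (1::real)" by simp
  then have "(1+v^2)^2 + (1+v^2) + 1 > (0::real)" by (smt (verit) zero_le_power2)
  moreover have "1 + v^2 > (0::real)" by (smt (verit) zero_le_power2)
  ultimately show ?thesis unfolding qq_def by (intro mult_pos_pos)
qed

lemma hh_pos: "hh v > 0"
  using qq_pos[of v] by (simp add: hh_def)

lemma hh_cont: "continuous_on S hh"
proof -
  have "continuous_on S qq" unfolding qq_def by (intro continuous_intros)
  moreover have "\<forall>v. sqrt (qq v) \<noteq> 0" using qq_pos by (simp add: less_imp_neq[symmetric])
  ultimately show ?thesis unfolding hh_def
    by (intro continuous_intros) auto
qed

lemma II_deriv: assumes "y > -2" shows "(II has_real_derivative hh y) (at y)"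
proof -
  have "(II has_real_derivative hh y) (at y within {-2..y+1})"
    unfolding II_def by (rule integral_has_real_derivative[OF hh_cont]) (use assms in auto)
  moreover have "at y within {-2..y+1} = at y"
    using assms by (intro at_within_Icc_at) auto
  ultimately show ?thesis by simp
qed

lemma sqrt_ge_m1: "u \<ge> 0 \<Longrightarrow> sqrt (u - 1) \<ge> -1"
proof -
  assume "u \<ge> 0"
  then have "sqrt (-1) \<le> sqrt (u-1)" by (subst real_sqrt_le_iff) auto
  moreover have "sqrt (-1) = -1" by (simp add: real_sqrt_minus)
  ultimately show ?thesis by simp
qed

lemma G2_cont_at: assumes "u \<ge> 0" shows "isCont G2 u"
proof -
  have c: "isCont II (sqrt (u-1))"
    using sqrt_ge_m1[OF assms] by (intro DERIV_isCont[OF II_deriv]) auto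
  have c2: "isCont (\<lambda>u. sqrt (u-1)) u" by (intro continuous_intros)
  have "isCont (\<lambda>u. II (sqrt (u-1))) u" using isCont_o2[OF c2 c] .
  then show ?thesis unfolding G2_def by (intro continuous_intros) 
qed

lemma G2_1: "G2 1 = 0" by (simp add: G2_def)

lemma G2_deriv: assumes "u > 1" shows "(G2 has_real_derivative 1/(2 * sqrt(u^4-u))) (at u)"
proof -
  have s: "sqrt (u-1) > 0" using assms by simp
  have d: "((\<lambda>u. II (sqrt (u-1))) has_real_derivative hh (sqrt (u-1)) * (inverse (sqrt (u-1)) / 2)) (at u)"
    using s by (intro DERIV_chain2[OF II_deriv]) (use s in linarith, auto intro!: derivative_eq_intros)
  have e: "1 + (sqrt (u-1))^2 = u" using assms by simp
  have "qq (sqrt (u-1)) = u * (u^2+u+1)" unfolding qq_def e by (simp add: power2_eq_square)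
  then have "hh (sqrt (u-1)) = 1 / sqrt (u * (u^2+u+1))"
    unfolding hh_def by simp
  moreover have "sqrt (u^4-u) = sqrt (u-1) * sqrt (u * (u^2+u+1))"
  proof -
    have "u^4 - u = (u-1) * (u * (u^2+u+1))" by (simp add: algebra_simps power2_eq_square power4_eq_xxxx)
    then show ?thesis by (simp add: real_sqrt_mult)
  qed
  ultimately have "hh (sqrt (u-1)) * (inverse (sqrt (u-1)) / 2) = 1/(2 * sqrt(u^4-u))"
    using assms s by (simp add: divide_simps)
  moreover have "((\<lambda>u. II (sqrt (u-1)) - II 0) has_real_derivative (hh (sqrt (u-1)) * (inverse (sqrt (u-1)) / 2) - 0)) (at u)"
    by (intro DERIV_diff d DERIV_const)
  ultimately show ?thesis unfolding G2_def by (simp add: mult.commute)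
qed



lemma G2_strict: assumes "1 \<le> x" "x < y" shows "G2 x < G2 y"
proof (rule DERIV_pos_imp_increasing_open[OF assms(2)])
  fix t assume t: "x < t" "t < y"
  then have t1: "t > 1" using assms by simp
  have "t^3 > 1" using t1 by (simp add: one_less_power)
  moreover have "t^4 - t = t * (t^3 - 1)" by (simp add: algebra_simps eval_nat_numeral)
  ultimately have "t^4 - t > 0" using t1 by simp
  then show "\<exists>y. DERIV G2 t :> y \<and> y > 0" using G2_deriv[OF t1] by auto
next
  show "continuous_on {x..y} G2" using assms
    by (intro continuous_at_imp_continuous_on ballI G2_cont_at) auto
qed

lemma G2_le: "1 \<le> x \<Longrightarrow> x \<le> y \<Longrightarrow> G2 x \<le> G2 y"
  using G2_strict by (cases "x = y") (auto simp: order.order_iff_strict)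

lemma G2_inj: "1 \<le> x \<Longrightarrow> 1 \<le> y \<Longrightarrow> G2 x = G2 y \<Longrightarrow> x = y"
  using G2_strict by (metis less_irrefl linorder_neqE_linordered_idom)

lemma G2_nonneg: "1 \<le> x \<Longrightarrow> G2 x \<ge> 0"
  using G2_le[of 1 x] G2_1 by simp

lemma K_cont: "isCont (\<lambda>t. G2 (t^2)) t"
proof -
  have c2: "isCont (\<lambda>t. t^2) t" by (intro continuous_intros)
  show ?thesis using isCont_o2[OF c2 G2_cont_at] by simp
qed

lemma K_deriv: assumes "x > 1" shows "DERIV (\<lambda>t. G2 (t^2)) x :> 1 / sqrt (x ^ (2*3) - 1)"
proof -
  have x2: "x^2 > 1" using assms by (simp add: one_less_power)
  have d: "DERIV (\<lambda>t. G2 (t^2)) x :> 1 / (2 * sqrt ((x^2)^4 - x^2)) * (2 * x)"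
    by (rule DERIV_chain2[where f=G2 and g="\<lambda>t. t^2", OF G2_deriv[OF x2]]) (auto intro!: derivative_eq_intros)
  have "(x^2)^4 - x^2 = x^2 * (x ^ (2*3) - 1)" by (simp add: algebra_simps eval_nat_numeral)
  then have "sqrt ((x^2)^4 - x^2) = x * sqrt (x ^ (2*3) - 1)" using assms by (simp add: real_sqrt_mult)
  then have "1 / (2 * sqrt ((x^2)^4 - x^2)) * (2 * x) = 1 / sqrt (x ^ (2*3) - 1)"
    using assms by simp
  with d show ?thesis by simp
qed

lemma LB_eq: assumes "r \<ge> 1"
  shows "(LBINT t=ereal 1..ereal r. 1 / sqrt (t ^ (2*3) - 1)) = G2 (r^2)"
proof (cases "r = 1")
  case True then show ?thesis by (simp add: G2_1)
next
  case False
  then have r: "r > 1" using assms by simp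
  have "(LBINT t=ereal 1..ereal r. 1 / sqrt (t ^ (2*3) - 1)) = G2 (r^2) - G2 (1^2)"
  proof (rule interval_integral_FTC_nonneg[where F="\<lambda>t. G2 (t^2)"])
    show "ereal 1 < ereal r" using r by simp
    show "DERIV (\<lambda>t. G2 (t^2)) x :> 1 / sqrt (x ^ (2*3) - 1)" if "ereal 1 < ereal x" "ereal x < ereal r" for x
      using that by (intro K_deriv) auto
    show "isCont (\<lambda>t. 1 / sqrt (t ^ (2*3) - 1)) x" if "ereal 1 < ereal x" "ereal x < ereal r" for x
    proof -
      have "x ^ (2*3) > 1" using that by (simp add: one_less_power)
      then show ?thesis by (intro continuous_intros) auto
    qed
    show "AE x in lborel. ereal 1 < ereal x \<longrightarrow> ereal x < ereal r \<longrightarrow> 0 \<le> 1 / sqrt (x ^ (2*3) - 1)"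
      by (intro AE_I2 impI) (simp add: one_le_power)
    show "(((\<lambda>t. G2 (t^2)) \<circ> real_of_ereal) \<longlongrightarrow> G2 (1^2)) (at_right (ereal 1))"
      unfolding ereal_tendsto_simps1
      by (rule Lim_at_imp_Lim_at_within) (use K_cont[of 1] in \<open>simp add: isCont_def\<close>)
    show "(((\<lambda>t. G2 (t^2)) \<circ> real_of_ereal) \<longlongrightarrow> G2 (r^2)) (at_left (ereal r))"
      unfolding ereal_tendsto_simps1
      by (rule Lim_at_imp_Lim_at_within) (use K_cont[of r] in \<open>simp add: isCont_def\<close>)
  qed
  then show ?thesis by (simp add: G2_1)
qed

lemma eta_big: assumes "0 \<le> a" "a < eta 3" shows "\<exists>R\<ge>1. G2 (R^2) > a"
proof (rule ccontr)
  assume "\<not> ?thesis"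
  then have bnd: "\<And>R. R \<ge> 1 \<Longrightarrow> G2 (R^2) \<le> a" by (simp add: not_less)
  define L where "L = Sup ((\<lambda>t. G2 (t^2)) ` {1..})"
  have bdd: "bdd_above ((\<lambda>t. G2 (t^2)) ` {1..})" using bnd by (auto intro!: bdd_aboveI)
  have ne: "(\<lambda>t. G2 (t^2)) ` {1..} \<noteq> {}" by auto
  have La: "L \<le> a" unfolding L_def using bnd by (intro cSup_least ne) auto
  have mono: "G2 (s^2) \<le> G2 (t^2)" if "1 \<le> s" "s \<le> t" for s t
    using that by (intro G2_le power_mono) (auto simp: one_le_power)
  have lim: "((\<lambda>t. G2 (t^2)) \<longlongrightarrow> L) at_top"
  proof (rule order_tendstoI)
    fix y assume "y < L"
    then obtain t0 where t0: "t0 \<ge> 1" "y < G2 (t0^2)"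
      unfolding L_def using less_cSup_iff[OF ne bdd] by auto
    show "\<forall>\<^sub>F t in at_top. y < G2 (t^2)"
      unfolding eventually_at_top_linorder
      using t0 mono by (intro exI[of _ t0]) (auto intro: less_le_trans)
  next
    fix y assume "L < y"
    show "\<forall>\<^sub>F t in at_top. G2 (t^2) < y"
      unfolding eventually_at_top_linorder
    proof (intro exI[of _ 1] allI impI)
      fix t :: real assume "t \<ge> 1"
      then have "G2 (t^2) \<le> L" unfolding L_def by (intro cSup_upper bdd) auto
      with \<open>L < y\<close> show "G2 (t^2) < y" by simp
    qed
  qed
  have "eta 3 = L - G2 (1^2)" unfolding eta_def
  proof (rule interval_integral_FTC_nonneg[where F="\<lambda>t. G2 (t^2)"])
    show "ereal 1 < \<infinity>" by simp
    show "DERIV (\<lambda>t. G2 (t^2)) x :> 1 / sqrt (x ^ (2*3) - 1)" if "ereal 1 < ereal x" "ereal x < \<infinity>" for x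
      using that by (intro K_deriv) auto
    show "isCont (\<lambda>t. 1 / sqrt (t ^ (2*3) - 1)) x" if "ereal 1 < ereal x" "ereal x < \<infinity>" for x
    proof -
      have "x ^ (2*3) > 1" using that by (simp add: one_less_power)
      then show ?thesis by (intro continuous_intros) auto
    qed
    show "AE x in lborel. ereal 1 < ereal x \<longrightarrow> ereal x < \<infinity> \<longrightarrow> 0 \<le> 1 / sqrt (x ^ (2*3) - 1)"
      by (intro AE_I2 impI) (simp add: one_le_power)
    show "(((\<lambda>t. G2 (t^2)) \<circ> real_of_ereal) \<longlongrightarrow> G2 (1^2)) (at_right (ereal 1))"
      unfolding ereal_tendsto_simps1
      by (rule Lim_at_imp_Lim_at_within) (use K_cont[of 1] in \<open>simp add: isCont_def\<close>)
    show "(((\<lambda>t. G2 (t^2)) \<circ> real_of_ereal) \<longlongrightarrow> L) (at_left \<infinity>)"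
      unfolding ereal_tendsto_simps1 by (rule lim)
  qed
  with La assms show False by (simp add: G2_1)
qed



definition NN :: "real \<Rightarrow> real" where "NN x = 4*x^4 + 8*x^3 - 4*x + 1"
definition DD :: "real \<Rightarrow> real" where "DD x = -8*x^4 + 8*x^3 + 8*x + 1"
definition UU :: "real \<Rightarrow> real" where "UU x = NN x / DD x"
definition MM :: "real \<Rightarrow> real" where "MM x = 12 * (8*x^6 + 20*x^3 - 1)"
definition Q8 :: "real \<Rightarrow> real" where
  "Q8 x = 36*(1 + 4*x + 16*x^2 + 16*x^3 + 28*x^4 - 32*x^5 + 64*x^6 - 32*x^7 + 16*x^8)"

lemma DD_anti: assumes "1 \<le> x" "x \<le> y" shows "DD y \<le> DD x"
proof -
  have e: "DD x - DD y = 8*(y-x)*((x^3+x^2*y+x*y^2+y^3) - (x^2+x*y+y^2) - 1)"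
    unfolding DD_def by algebra
  have y1: "1 \<le> y" using assms by simp
  have "x^2 \<le> x^3" using assms by (simp add: power_increasing)
  moreover have "x*y \<le> x^2*y" using assms y1 by (simp add: power2_eq_square)
  moreover have "y^2 \<le> x*y^2" using assms by simp
  moreover have "1 \<le> y^3" using y1 by simp
  ultimately have "(x^3+x^2*y+x*y^2+y^3) - (x^2+x*y+y^2) - 1 \<ge> 0" by simp
  with e assms show ?thesis by (smt (verit) mult_nonneg_nonneg)
qed

lemma NN_DD: "NN x - DD x = 12*x*(x^3-1)"
  unfolding NN_def DD_def by algebra

lemma NN_pos: assumes "x \<ge> 1" shows "NN x > 0"
proof -
  have "4*x \<le> 4*x^4" using assms by (simp add: power_increasing[of 1 4 x, simplified])
  moreover have "x^3 \<ge> 0" using assms by simp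
  ultimately show ?thesis unfolding NN_def by linarith
qed

lemma MM_pos: assumes "x \<ge> 1" shows "MM x > 0"
proof -
  have "x^6 \<ge> 1" "x^3 \<ge> 1" using assms by simp_all
  then show ?thesis unfolding MM_def by simp
qed

lemma UU_ge1: assumes "x \<ge> 1" "DD x > 0" shows "UU x \<ge> 1"
proof -
  have "x^3 \<ge> 1" using assms by simp
  then have "NN x - DD x \<ge> 0" using assms by (simp add: NN_DD)
  then show ?thesis unfolding UU_def using assms by simp
qed

lemma UU_gt1: assumes "x > 1" "DD x > 0" shows "UU x > 1"
proof -
  have "x^3 > 1" using assms by (simp add: one_less_power)
  then have "NN x - DD x > 0" using assms by (simp add: NN_DD)
  then show ?thesis unfolding UU_def using assms by simp
qed

lemma UU_deriv: assumes "DD x \<noteq> 0" shows "DERIV UU x :> MM x / (DD x)^2"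
proof -
  have d: "DERIV UU x :> ((16*x^3 + 24*x^2 - 4) * DD x - NN x * (-32*x^3 + 24*x^2 + 8)) / (DD x * DD x)"
    unfolding UU_def using assms
    by (intro DERIV_divide) (auto simp: NN_def DD_def intro!: derivative_eq_intros)
  have "(16*x^3 + 24*x^2 - 4) * DD x - NN x * (-32*x^3 + 24*x^2 + 8) = MM x"
    unfolding NN_def DD_def MM_def by algebra
  with d show ?thesis by (simp add: power2_eq_square)
qed

lemma poly1: "NN x ^ 3 - DD x ^ 3 = (x^4 - x) * Q8 x"
  unfolding NN_def DD_def Q8_def by algebra

lemma poly2: "MM x ^ 2 = 4 * NN x * Q8 x"
  unfolding NN_def MM_def Q8_def by algebra

lemma key_id: assumes "DD x \<noteq> 0"
  shows "(UU x)^4 - UU x = (x^4 - x) * (MM x / (2 * (DD x)^2))^2"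
proof -
  have "(UU x)^4 - UU x = NN x * (NN x ^ 3 - DD x ^ 3) / (DD x)^4"
    unfolding UU_def using assms by (simp add: field_simps eval_nat_numeral)
  also have "\<dots> = (x^4 - x) * (4 * NN x * Q8 x) / (4 * (DD x)^4)"
    by (simp add: poly1)
  also have "\<dots> = (x^4 - x) * (MM x / (2 * (DD x)^2))^2"
    using assms by (simp add: poly2 power_divide power_mult_distrib flip: power_mult)
  finally show ?thesis .
qed



lemma UU_1: "UU 1 = 1" by (simp add: UU_def NN_def DD_def)

lemma doubling: assumes "1 \<le> u" "0 < DD u" shows "G2 (UU u) = 2 * G2 u"
proof (cases "u = 1")
  case True then show ?thesis by (simp add: UU_1 G2_1)
next
  case False
  then have u1: "1 < u" using assms by simp
  define Hd where "Hd x = G2 (UU x) - 2 * G2 x" for x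
  have DDpos: "DD x > 0" if "1 \<le> x" "x \<le> u" for x
    using DD_anti[OF that] assms by simp
  have "Hd u = Hd 1"
  proof (rule DERIV_isconst_end[OF u1])
    show "continuous_on {1..u} Hd"
    proof (intro continuous_at_imp_continuous_on ballI)
      fix x assume x: "x \<in> {1..u}"
      then have dx: "DD x > 0" using DDpos by simp
      have c1: "isCont UU x" unfolding UU_def NN_def DD_def using dx
        by (intro continuous_intros) (auto simp: DD_def)
      have c2: "isCont G2 (UU x)" using UU_ge1[of x] dx x by (intro G2_cont_at) auto
      have c3: "isCont G2 x" using x by (intro G2_cont_at) auto
      show "isCont Hd x" unfolding Hd_def using isCont_o2[OF c1 c2] c3 by (intro continuous_intros) auto
    qed
  next
    fix x assume x: "1 < x" "x < u"
    then have dx: "DD x > 0" using DDpos by simp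
    have U1: "UU x > 1" using UU_gt1 x dx by simp
    have d: "DERIV Hd x :> 1 / (2 * sqrt (UU x ^ 4 - UU x)) * (MM x / (DD x)^2) - 2 * (1 / (2 * sqrt (x^4 - x)))"
      unfolding Hd_def
      by (intro DERIV_diff DERIV_cmult DERIV_chain2[where f=G2 and g=UU, OF G2_deriv[OF U1] UU_deriv] G2_deriv)
        (use x dx in auto)
    have m: "MM x / (2 * (DD x)^2) > 0" using MM_pos[of x] x dx by simp
    have "sqrt (UU x ^ 4 - UU x) = sqrt (x^4 - x) * (MM x / (2 * (DD x)^2))"
      using key_id[of x] dx m MM_pos[of x] x by (simp add: real_sqrt_mult)
    moreover have "x^4 - x > 0"
    proof -
      have "x^3 > 1" using x by (simp add: one_less_power)
      moreover have "x^4 - x = x * (x^3 - 1)" by (simp add: algebra_simps eval_nat_numeral)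
      ultimately show ?thesis using x by simp
    qed
    ultimately have "1 / (2 * sqrt (UU x ^ 4 - UU x)) * (MM x / (DD x)^2) - 2 * (1 / (2 * sqrt (x^4 - x))) = 0"
      using m dx MM_pos[of x] x by (simp add: field_simps)
    with d show "DERIV Hd x :> 0" by simp
  qed
  then show ?thesis by (simp add: Hd_def UU_1 G2_1)
qed



lemma final_alg:
  fixes C :: real
  assumes C1: "C \<ge> 1"
  defines "v \<equiv> (-1 + C^2 + sqrt 3 * sqrt (1 + C^2 + C^4)) / (4 * C^2 + 2)
    + sqrt 3 * C * sqrt (-3 - 6 * C^2 + 2 * sqrt 3 * (1 + 2 * C^2) * sqrt (1 + C^2 + C^4))
        / (2 * (1 + 2 * C^2) powr (3/2))"
  shows "v \<ge> 1 \<and> NN v = C^2 * DD v"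
proof -
  define X where "X = C^2"
  have X1: "X \<ge> 1" using C1 unfolding X_def by (simp add: one_le_power)
  define W where "W = 1 + 2 * X"
  have W0: "W > 0" using X1 unfolding W_def by simp
  define sg where "sg = sqrt 3 * sqrt (1 + X + X^2)"
  have s0: "sg \<ge> 0" unfolding sg_def using X1 by simp
  have s2: "sg^2 = 3 * (1 + X + X^2)" unfolding sg_def using X1
    by (simp add: power_mult_distrib add_nonneg_nonneg)
  have sX: "sg \<ge> X + 2"
  proof (rule power2_le_imp_le[OF _ s0])
    have h: "0 \<le> (X-1) * (2 * X+1)" using X1 by simp
    have "(X+2)^2 \<le> 3 * (1 + X + X^2)" using h
      by (simp add: power2_eq_square algebra_simps)
    then show "(X+2)^2 \<le> sg^2" using s2 by simp
  qed
  define T where "T = W * (2* sg - 3)"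
  have T0: "T \<ge> 0" unfolding T_def using W0 sX X1 by simp
  define a where "a = -1 + X + sg"
  define a' where "a' = -1 + X - sg"
  define A where "A = a / (2 * W)"
  define A' where "A' = a' / (2 * W)"
  define B where "B = sqrt 3 * C * sqrt T / (2 * (W * sqrt W))"
  define E where "E = 3 * X * (2* sg - 3) / (4 * W^2)"
  define P where "P = a^2 - 3 * X * (2* sg-3)"
  define P' where "P' = a'^2 - 3 * X * (-2* sg-3)"
  define p where "p = P / (4 * W^2)"
  define p' where "p' = P' / (4 * W^2)"
  have C4: "C^4 = X^2" unfolding X_def by simp
  have Wp: "W powr (3/2) = W * sqrt W"
  proof -
    have "W powr (3/2) = W powr (1 + 1/2)" by simp
    also have "\<dots> = W powr 1 * W powr (1/2)" by (rule powr_add)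
    also have "\<dots> = W * sqrt W" using W0 by (simp add: powr_half_sqrt)
    finally show ?thesis .
  qed
  have vAB: "v = A + B"
  proof -
    have "-3 - 6 * C^2 + 2 * sqrt 3 * (1 + 2 * C^2) * sqrt (1 + C^2 + C^4) = T"
      unfolding T_def W_def sg_def X_def[symmetric] C4 by (simp add: algebra_simps)
    moreover have "(-1 + C^2 + sqrt 3 * sqrt (1 + C^2 + C^4)) / (4 * C^2 + 2) = A"
      unfolding A_def a_def W_def sg_def X_def[symmetric] C4 by (simp add: algebra_simps)
    moreover have "(1 + 2 * C^2) powr (3/2) = W * sqrt W" unfolding W_def X_def[symmetric] using Wp W_def by simp
    ultimately show ?thesis unfolding v_def B_def by simp
  qed
  have B0: "B \<ge> 0" unfolding B_def using C1 T0 W0 by simp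
  have B2: "B^2 = E"
  proof -
    have "B^2 = (sqrt 3)^2 * C^2 * (sqrt T)^2 / (2^2 * W^2 * (sqrt W)^2)" unfolding B_def
      by (simp only: power_mult_distrib power_divide)
    also have "\<dots> = 3 * C^2 * T / (4 * W^3)" using T0 W0
      by (simp add: power3_eq_cube power2_eq_square)

    also have "\<dots> = W * (3 * X * (2 * sg - 3)) / (W * (4 * W^2))"
      unfolding T_def X_def[symmetric] by (simp add: algebra_simps power3_eq_cube power2_eq_square)
    also have "\<dots> = E" unfolding E_def using W0 by simp
    finally show ?thesis .
  qed
  have id1: "P + P' + 4 * a * a' = 0" unfolding P_def P'_def a_def a'_def using s2 by algebra
  have id2: "a * P' + a' * P = 4 * W^3" unfolding P_def P'_def a_def a'_def W_def using s2 by algebra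
  have id3: "P * P' = 4 * W^3 * (1-X)" unfolding P_def P'_def a_def a'_def W_def using s2 by algebra
  have pE: "p = A^2 - E" unfolding p_def P_def A_def E_def using W0 by (simp add: field_simps)
  have quad: "v^2 - 2 * A * v + p = 0" using vAB B2 pE by algebra
  have fac: "NN v - X * DD v = 4 * W * (v^2 - 2 * A * v + p) * (v^2 - 2 * A' * v + p')"
  proof -
    have e1: "4 * W * (v^2 - 2 * A * v + p) * (v^2 - 2 * A' * v + p') =
      4 * W * v^4 - 8 * (W * (A+A')) * v^3 + 4 * W * (p+p'+4 * A * A') * v^2 - 8 * W * (A * p'+A' * p) * v + 4 * W * (p * p')"
      by algebra
    have e2: "W * (A+A') = X - 1" unfolding A_def A'_def a_def a'_def using W0 by (simp add: field_simps)
    have e3: "p+p'+4 * A * A' = 0" unfolding p_def p'_def A_def A'_def using W0 id1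
      apply (simp add: field_simps) by algebra
    have e4: "A * p'+A' * p = 1/2" unfolding p_def p'_def A_def A'_def using W0 id2
      by (simp add: field_simps power2_eq_square power3_eq_cube)
    have e5: "4 * W * (p * p') = 1 - X" unfolding p_def p'_def using W0 id3
      apply (simp add: field_simps) by algebra
    have "NN v - X * DD v = 4 * W * v^4 - 8 * (W * (A+A')) * v^3 + 4 * W * (p+p'+4 * A * A') * v^2 - 8 * W * (A * p'+A' * p) * v + 4 * W * (p * p')"
      unfolding e2 e3 e4 e5 unfolding NN_def DD_def W_def by algebra
    then show ?thesis using e1 by simp
  qed
  have eq: "NN v = C^2 * DD v" using fac quad unfolding X_def by simp
  have ge: "B \<ge> 1 - A"
  proof (rule power2_le_imp_le[OF _ B0])
    have "B^2 - (1-A)^2 = 6 * W * (sg - X - 2) / (4 * W^2)"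
      unfolding B2 E_def A_def a_def W_def using W0 s2 unfolding W_def
      apply (simp add: field_simps) by algebra
    moreover have "6 * W * (sg - X - 2) / (4 * W^2) \<ge> 0" using W0 sX by simp
    ultimately show "(1-A)^2 \<le> B^2" by simp
  qed
  then show ?thesis using vAB eq by simp
qed



lemma K_cont_on: "continuous_on S (\<lambda>t. G2 (t^2))"
  by (intro continuous_at_imp_continuous_on ballI K_cont)

lemma cleafh_eq:
  assumes "C \<ge> 1" "G2 (C^2) = \<bar>l\<bar>"
  shows "cleafh 3 l = C"
  unfolding cleafh_def
proof (rule the_equality)
  show "1 \<le> C \<and> (LBINT t=ereal 1..ereal C. 1 / sqrt (t ^ (2*3) - 1)) = \<bar>l\<bar>"
    using assms LB_eq[of C] by simp
next
  fix r assume r: "1 \<le> r \<and> (LBINT t=ereal 1..ereal r. 1 / sqrt (t ^ (2*3) - 1)) = \<bar>l\<bar>"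
  then have "G2 (r^2) = G2 (C^2)" using LB_eq[of r] assms by simp
  moreover have "1 \<le> r^2" "1 \<le> C^2" using r assms by (simp_all add: one_le_power)
  ultimately have "r^2 = C^2" using G2_inj by blast
  then show "r = C" using r assms by (simp add: power2_eq_iff_nonneg)
qed

theorem mainTheorem17:
  fixes l :: real
  assumes "l \<in> {- eta 3<..<eta 3}"
  shows "(cleafh 3 (l/2))^2 =
      (-1 + (cleafh 3 l)^2 + sqrt 3 * sqrt (1 + (cleafh 3 l)^2 + (cleafh 3 l)^4))
        / (4 * (cleafh 3 l)^2 + 2)
    + sqrt 3 * cleafh 3 l
        * sqrt (-3 - 6 * (cleafh 3 l)^2 + 2 * sqrt 3 * (1 + 2 * (cleafh 3 l)^2)
                  * sqrt (1 + (cleafh 3 l)^2 + (cleafh 3 l)^4))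
        / (2 * (1 + 2 * (cleafh 3 l)^2) powr (3/2))"
proof -
  define a where "a = \<bar>l\<bar>"
  have a0: "0 \<le> a" and aeta: "a < eta 3" using assms unfolding a_def by auto
  obtain R where R1: "R \<ge> 1" and RG: "G2 (R^2) > a" using eta_big[OF a0 aeta] by blast
  have "\<exists>C. 1 \<le> C \<and> C \<le> R \<and> G2 (C^2) = a"
    using R1 RG a0 by (intro IVT'[OF _ _ _ K_cont_on]) (auto simp: G2_1)
  then obtain C where C1: "1 \<le> C" "C \<le> R" and CG: "G2 (C^2) = a" by blast
  have "\<exists>c. 1 \<le> c \<and> c \<le> C \<and> G2 (c^2) = a/2"
    using C1 CG a0 by (intro IVT'[OF _ _ _ K_cont_on]) (auto simp: G2_1)
  then obtain c where c1: "1 \<le> c" "c \<le> C" and cG: "G2 (c^2) = a/2" by blast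
  have clC: "cleafh 3 l = C" using cleafh_eq[OF C1(1)] CG a_def by simp
  have clc: "cleafh 3 (l/2) = c" using cleafh_eq[OF c1(1)] cG a_def by simp
  define u where "u = c^2"
  have u1: "u \<ge> 1" unfolding u_def using c1 by (simp add: one_le_power)
  have uG: "G2 u = a/2" using cG u_def by simp
  have Du: "DD u > 0"
  proof (rule ccontr)
    assume "\<not> DD u > 0"
    then have Dn: "DD u \<le> 0" by simp
    have R2: "R^2 \<ge> 1" using R1 by (simp add: one_le_power)
    have "continuous_on {1..u} (\<lambda>v. NN v - R^2 * DD v)"
      unfolding NN_def DD_def by (intro continuous_intros)
    moreover have "NN 1 - R^2 * DD 1 \<le> 0" using R2 by (simp add: NN_def DD_def)
    moreover have "0 \<le> NN u - R^2 * DD u" using NN_pos[OF u1] Dn R2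
      by (smt (verit) mult_nonneg_nonpos zero_le_power2)
    ultimately obtain v1 where v1: "1 \<le> v1" "v1 \<le> u" "NN v1 - R^2 * DD v1 = 0"
      using IVT'[of "\<lambda>v. NN v - R^2 * DD v" 1 0 u] u1 by auto
    have NNv: "NN v1 > 0" using NN_pos v1(1) by simp
    have Dv: "DD v1 > 0"
    proof (rule ccontr)
      assume "\<not> DD v1 > 0"
      then have "R^2 * DD v1 \<le> 0" using R2 by (simp add: mult_nonneg_nonpos)
      then show False using v1 NNv by simp
    qed
    have "UU v1 = R^2" unfolding UU_def using v1 Dv by (simp add: field_simps)
    then have "G2 (R^2) = 2 * G2 v1" using doubling[OF v1(1) Dv] by simp
    also have "\<dots> \<le> 2 * G2 u" using G2_le[OF v1(1,2)] by simp
    finally show False using uG RG by simp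
  qed
  have "G2 (UU u) = G2 (C^2)" using doubling[OF u1 Du] uG CG by simp
  moreover have "UU u \<ge> 1" using UU_ge1[OF u1 Du] .
  moreover have "C^2 \<ge> 1" using C1 by (simp add: one_le_power)
  ultimately have UuC: "UU u = C^2" using G2_inj by blast
  define v where "v = (-1 + C^2 + sqrt 3 * sqrt (1 + C^2 + C^4)) / (4 * C^2 + 2)
    + sqrt 3 * C * sqrt (-3 - 6 * C^2 + 2 * sqrt 3 * (1 + 2 * C^2) * sqrt (1 + C^2 + C^4))
        / (2 * (1 + 2 * C^2) powr (3/2))"
  have fa: "v \<ge> 1 \<and> NN v = C^2 * DD v" using final_alg[OF C1(1)] unfolding v_def by blast
  have C2: "C^2 > 0" using C1 by simp
  have Dv: "DD v > 0"
  proof (rule ccontr)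
    assume "\<not> DD v > 0"
    then have "C^2 * DD v \<le> 0" using C2 by (simp add: mult_nonneg_nonpos)
    then show False using fa NN_pos[of v] by simp
  qed
  have "UU v = C^2" unfolding UU_def using fa Dv by (simp add: field_simps)
  then have "2 * G2 v = 2 * G2 u" using doubling[OF _ Dv] doubling[OF u1 Du] fa UuC by simp
  then have "v = u" using G2_inj[of v u] fa u1 by simp
  then show ?thesis unfolding clC clc using u_def v_def by simp
qed

end
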